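(* Let $C$ be a set of colours and $W_2=\{w_0w_1w_2\cdots\in C^\omega:\ w_i\neq w_{i+1}\text{ for all } i\}$. Then $W_2$ does not have ($\varepsilon$-free) chromatic memory $<|C|$; consequently $W_2$ does not have $\varepsilon$-chromatic memory $<|C|$ either.
   Context: A $C$-game is $(G,V_{\mathrm{Eve}},v_0,W)$ with $G$ a $C$-graph (vertices with coloured directed edges $v\xrightarrow{c}v'$, every vertex having an outgoing edge). A strategy is $(S,\pi,s_0)$ with $S$ a $C$-graph, $\pi:S\to G$ an edge- and colour-preserving map, $\pi(s_0)=v_0$, such that for all $v\notin V_{\mathrm{Eve}}$, $v\xrightarrow{c}v'\in E(G)$, $s\in\pi^{-1}(v)$ there is $s'\in\pi^{-1}(v')$ with $s\xrightarrow{c}s'$; it is winning if all infinite paths from $s_0$ have colour sequence in $W$. A product strategy over $M$ has $V(S)\subseteq V(G)\times M$ and $\pi(v,m)=v$; it is chromatic if there is $\delta:M\times C\to M$ with $m'=\delta(m,c)$ for each edge $(v,m)\xrightarrow{c}(v',m')$ of $S$. $W$ has chromatic memory $<\nu$ if every game with objective $W$ having a winning strategy has a winning chromatic product strategy with $|\pi^{-1}(v)|<\nu$ for all $v$. With a fresh colour $\varepsilon$ and $C^\varepsilon=C\sqcup\{\varepsilon\}$, $W^\varepsilon$ is the set of $w\in(C^\varepsilon)^\omega$ whose $\varepsilon$-free projection is infinite and in $W$ or finite with a continuation in $W$; $W$ has $\varepsilon$-chromatic memory $<\nu$ if every $C^\varepsilon$-game with objective $W^\varepsilon$ having a winning strategy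 has a winning chromatic product strategy over some $M$ with $|M|<\nu$ whose update function satisfies $\delta(m,\varepsilon)=m$. *)

theory Defs
  imports Main "HOL-Library.Infinite_Set"
begin

definition cgraph :: "'v set \<Rightarrow> ('v \<times> 'col \<times> 'v) set \<Rightarrow> bool" where
  "cgraph V E \<longleftrightarrow> E \<subseteq> V \<times> UNIV \<times> V \<and> (\<forall>v\<in>V. \<exists>c v'. (v, c, v') \<in> E)"

text \<open>A game (G, V_Eve, v0, W): G = (V,E) a C-graph, VE the vertices of Eve, v0 initial.\<close>

definition is_game :: "'v set \<Rightarrow> ('v \<times> 'col \<times> 'v) set \<Rightarrow> 'v set \<Rightarrow> 'v \<Rightarrow> bool" where
  "is_game V E VE v0 \<longleftrightarrow> cgraph V E \<and> VE \<subseteq> V \<and> v0 \<in> V"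

definition is_strategy ::
  "'v set \<Rightarrow> ('v \<times> 'col \<times> 'v) set \<Rightarrow> 'v set \<Rightarrow> 'v \<Rightarrow>
   's set \<Rightarrow> ('s \<times> 'col \<times> 's) set \<Rightarrow> ('s \<Rightarrow> 'v) \<Rightarrow> 's \<Rightarrow> bool" where
  "is_strategy V E VE v0 S ES \<pi> s0 \<longleftrightarrow>
     cgraph S ES \<and> s0 \<in> S \<and> \<pi> ` S \<subseteq> V \<and>
     (\<forall>s c s'. (s, c, s') \<in> ES \<longrightarrow> (\<pi> s, c, \<pi> s') \<in> E) \<and>
     \<pi> s0 = v0 \<and>
     (\<forall>v c v' s. v \<in> V - VE \<longrightarrow> (v, c, v') \<in> E \<longrightarrow> s \<in> S \<longrightarrow> \<pi> s = v \<longrightarrow>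
        (\<exists>s'. s' \<in> S \<and> \<pi> s' = v' \<and> (s, c, s') \<in> ES))"

definition winning_from :: "('s \<times> 'col \<times> 's) set \<Rightarrow> 's \<Rightarrow> (nat \<Rightarrow> 'col) set \<Rightarrow> bool" where
  "winning_from ES s0 W \<longleftrightarrow>
     (\<forall>\<rho> \<kappa>. \<rho> 0 = s0 \<and> (\<forall>i. (\<rho> i, \<kappa> i, \<rho> (Suc i)) \<in> ES) \<longrightarrow> \<kappa> \<in> W)"

text \<open>Strategy vertices are taken from the type of
  finite plays ('col \<times> 'v) list, which is general enough (every strategy can be unfolded
  into one over finite plays).\<close>

definition has_winning_strategy ::
  "'v set \<Rightarrow> ('v \<times> 'col \<times> 'v) set \<Rightarrow> 'v set \<Rightarrow> 'v \<Rightarrow> (nat \<Rightarrow> 'col) set \<Rightarrow> bool" where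
  "has_winning_strategy V E VE v0 W \<longleftrightarrow>
     (\<exists>(S :: ('col \<times> 'v) list set) ES \<pi> s0.
        is_strategy V E VE v0 S ES \<pi> s0 \<and> winning_from ES s0 W)"

definition chromatic ::
  "(('v \<times> 'm) \<times> 'col \<times> ('v \<times> 'm)) set \<Rightarrow> ('m \<Rightarrow> 'col \<Rightarrow> 'm) \<Rightarrow> bool" where
  "chromatic ES \<delta> \<longleftrightarrow> (\<forall>v m c v' m'. ((v, m), c, (v', m')) \<in> ES \<longrightarrow> m' = \<delta> m c)"

text \<open>W has chromatic memory < nu (nu a cardinal, given as a cardinal order),
  relative to games whose vertices live in type 'v and memories in type 'm.
  The fibre pi^{-1}(v) of a product strategy S is {m. (v,m) \<in> S}.\<close>

definition chrom_mem_lt ::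
  "'v itself \<Rightarrow> 'm itself \<Rightarrow> (nat \<Rightarrow> 'col) set \<Rightarrow> 'x rel \<Rightarrow> bool" where
  "chrom_mem_lt _ _ W \<nu> \<longleftrightarrow>
     (\<forall>(V :: 'v set) E VE v0.
        is_game V E VE v0 \<and> has_winning_strategy V E VE v0 W \<longrightarrow>
        (\<exists>(S :: ('v \<times> 'm) set) ES s0 \<delta>.
           is_strategy V E VE v0 S ES fst s0 \<and> winning_from ES s0 W \<and>
           chromatic ES \<delta> \<and>
           (\<forall>v. ordLess2 (card_of {m. (v, m) \<in> S}) \<nu>)))"

definition W2 :: "(nat \<Rightarrow> 'c) set" where
  "W2 = {w. \<forall>i. w i \<noteq> w (Suc i)}"

text \<open>W^epsilon over C \<union> {epsilon}, with epsilon represented by None.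
  The epsilon-free projection of w is infinite iff infinitely many letters are not None;
  in that case it is the sequence of the non-None letters in order.  Otherwise it is the
  finite word of the non-None letters, which must have a continuation in W.\<close>

definition eps_ext :: "(nat \<Rightarrow> 'c) set \<Rightarrow> (nat \<Rightarrow> 'c option) set" where
  "eps_ext W = {w.
     (infinite {i. w i \<noteq> None} \<and>
        (\<lambda>n. the (w (enumerate {i. w i \<noteq> None} n))) \<in> W) \<or>
     (\<exists>N u. (\<forall>i\<ge>N. w i = None) \<and> u \<in> W \<and>
        (let xs = map the (filter (\<lambda>x. x \<noteq> None) (map w [0..<N]))
         in \<forall>k < length xs. u k = xs ! k))}"

definition eps_chrom_mem_lt ::
  "'v itself \<Rightarrow> 'm itself \<Rightarrow> (nat \<Rightarrow> 'c) set \<Rightarrow> 'x rel \<Rightarrow> bool" where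
  "eps_chrom_mem_lt _ _ W \<nu> \<longleftrightarrow>
     (\<forall>(V :: 'v set) (E :: ('v \<times> 'c option \<times> 'v) set) VE v0.
        is_game V E VE v0 \<and> has_winning_strategy V E VE v0 (eps_ext W) \<longrightarrow>
        (\<exists>(M :: 'm set) (S :: ('v \<times> 'm) set) ES s0 \<delta>.
           ordLess2 (card_of M) \<nu> \<and>
           S \<subseteq> V \<times> M \<and> (\<forall>m\<in>M. \<forall>c. \<delta> m c \<in> M) \<and> (\<forall>m. \<delta> m None = m) \<and>
           is_strategy V E VE v0 S ES fst s0 \<and> winning_from ES s0 (eps_ext W) \<and>
           chromatic ES \<delta>))"

end

theory Submission
  imports Defs
begin

definition opts :: "'c \<Rightarrow> 'c \<Rightarrow> 'c list \<Rightarrow> 'c set" where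
  "opts a b v = (if length v = 2 \<and> v!0 \<noteq> v!1 then {v!0, v!1} else {a, b})"

definition gE :: "('c \<Rightarrow> 'k) \<Rightarrow> 'c \<Rightarrow> 'c \<Rightarrow> ('c list \<times> 'k \<times> 'c list) set" where
  "gE f a b = {(v, k, v'). (v = [] \<and> v' \<noteq> [] \<and> k \<in> range f) \<or>
      (v \<noteq> [] \<and> v' = [a] \<and> (\<exists>d \<in> opts a b v. k = f d))}"

definition gpi :: "('k \<times> 'c list) list \<Rightarrow> 'c list" where
  "gpi s = (if s = [] then [] else snd (hd s))"

definition gS :: "('k \<times> 'c list) list set" where
  "gS = {[]} \<union> {[(k, v)] | k v. v \<noteq> []}"

definition gES :: "('c \<Rightarrow> 'k) \<Rightarrow> 'c \<Rightarrow> 'c \<Rightarrow>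
   (('k \<times> 'c list) list \<times> 'k \<times> ('k \<times> 'c list) list) set" where
  "gES f a b = {(s, k, [(k, v')]) | s k v'. s \<in> gS \<and> (gpi s, k, v') \<in> gE f a b \<and>
      (s = [] \<or> k \<noteq> fst (hd s))}"

lemma opts_two:
  assumes "a \<noteq> b" shows "\<exists>x y. x \<in> opts a b v \<and> y \<in> opts a b v \<and> x \<noteq> y"
  using assms unfolding opts_def by auto

lemma game_ok:
  fixes f :: "'c \<Rightarrow> 'k" and a b :: 'c
  shows "is_game UNIV (gE f a b) (UNIV - {[]}) []"
  unfolding is_game_def cgraph_def gE_def
proof (intro conjI ballI)
  fix v :: "'c list"
  show "\<exists>c v'. (v, c, v') \<in> {(v, k, v'). (v = [] \<and> v' \<noteq> [] \<and> k \<in> range f) \<or>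
      (v \<noteq> [] \<and> v' = [a] \<and> (\<exists>d \<in> opts a b v. k = f d))}"
  proof (cases "v = []")
    case True then show ?thesis by auto
  next
    case False
    have "a \<in> opts a b v \<or> (length v = 2 \<and> v!0 \<noteq> v!1)" unfolding opts_def by auto
    then have "\<exists>d. d \<in> opts a b v" unfolding opts_def by auto
    then obtain d where "d \<in> opts a b v" by blast
    then show ?thesis using False by blast
  qed
qed auto

lemma strat_ok:
  fixes f :: "'c \<Rightarrow> 'k" and a b :: 'c
  assumes ab: "a \<noteq> b" and inj: "inj f"
  shows "is_strategy UNIV (gE f a b) (UNIV - {[]}) [] gS (gES f a b) gpi []"
  unfolding is_strategy_def
proof (intro conjI allI impI)
  show "cgraph gS (gES f a b)"
    unfolding cgraph_def
  proof (intro conjI ballI)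
    show "gES f a b \<subseteq> gS \<times> UNIV \<times> gS"
      unfolding gES_def gS_def gE_def by auto
  next
    fix s assume s: "s \<in> (gS :: ('k \<times> 'c list) list set)"
    show "\<exists>c v'. (s, c, v') \<in> gES f a b"
    proof (cases "s = []")
      case True
      have "(s, f a, [(f a, [a])]) \<in> gES f a b"
        using True s unfolding gES_def gE_def gpi_def by auto
      then show ?thesis by blast
    next
      case False
      then obtain k v where sv: "s = [(k, v)]" "v \<noteq> []" using s unfolding gS_def by auto
      obtain x y where xy: "x \<in> opts a b v" "y \<in> opts a b v" "x \<noteq> y" using opts_two[OF ab] by blast
      have "f x \<noteq> f y" using xy inj by (auto dest: injD)
      then obtain d where d: "d \<in> opts a b v" "f d \<noteq> k" using xy by metis
      have "(s, f d, [(f d, [a])]) \<in> gES f a b"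
        using sv s d unfolding gES_def gE_def gpi_def by auto
      then show ?thesis by blast
    qed
  qed
next
  show "[] \<in> gS" unfolding gS_def by auto
next
  show "gpi ` gS \<subseteq> UNIV" by auto
next
  fix s c s' assume "(s, c, s') \<in> gES f a b"
  then show "(gpi s, c, gpi s') \<in> gE f a b"
    unfolding gES_def gpi_def by auto
next
  show "gpi [] = []" unfolding gpi_def by auto
next
  fix v c v' and s :: "('k \<times> 'c list) list"
  assume h: "v \<in> UNIV - (UNIV - {[]})" "(v, c, v') \<in> gE f a b" "s \<in> gS" "gpi s = v"
  then have v: "v = []" by auto
  then have s: "s = []" using h(3,4) unfolding gS_def gpi_def by auto
  have v': "v' \<noteq> []" using h(2) v unfolding gE_def by auto
  have "[(c, v')] \<in> gS" "gpi [(c, v')] = v'" "(s, c, [(c, v')]) \<in> gES f a b"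
    using v' s v h(2,3) unfolding gS_def gpi_def gES_def by auto
  then show "\<exists>s'. s' \<in> gS \<and> gpi s' = v' \<and> (s, c, s') \<in> gES f a b" by blast
qed

lemma strat_win:
  assumes "\<And>\<kappa>. (\<forall>i. \<kappa> i \<in> range f) \<Longrightarrow> (\<forall>i. \<kappa> i \<noteq> \<kappa> (Suc i)) \<Longrightarrow> \<kappa> \<in> W"
  shows "winning_from (gES f a b) [] W"
  unfolding winning_from_def
proof (intro allI impI)
  fix \<rho> \<kappa> assume h: "\<rho> 0 = [] \<and> (\<forall>i. (\<rho> i, \<kappa> i, \<rho> (Suc i)) \<in> gES f a b)"
  have r0: "\<exists>v'. \<rho> (Suc i) = [(\<kappa> i, v')]" for i
  proof -
    have "(\<rho> i, \<kappa> i, \<rho> (Suc i)) \<in> gES f a b" using h by blast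
    then show ?thesis unfolding gES_def by blast
  qed
  have r: "\<rho> (Suc i) = [(\<kappa> i, snd (hd (\<rho> (Suc i))))]" for i
    using r0[of i] by auto
  have "\<kappa> i \<in> range f" for i
    using h unfolding gES_def gE_def by fastforce
  moreover have "\<kappa> i \<noteq> \<kappa> (Suc i)" for i
  proof -
    have "(\<rho> (Suc i), \<kappa> (Suc i), \<rho> (Suc (Suc i))) \<in> gES f a b" using h by blast
    then have "\<kappa> (Suc i) \<noteq> fst (hd (\<rho> (Suc i)))"
      using r[of i] unfolding gES_def by auto
    then show ?thesis using r[of i] by (metis fst_conv list.sel(1))
  qed
  ultimately show "\<kappa> \<in> W" using assms by blast
qed

lemma has_win:
  assumes ab: "a \<noteq> b" and inj: "inj f"
    and good: "\<And>\<kappa>. (\<forall>i. \<kappa> i \<in> range f) \<Longrightarrow> (\<forall>i. \<kappa> i \<noteq> \<kappa> (Suc i)) \<Longrightarrow> \<kappa> \<in> W"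
  shows "has_winning_strategy UNIV (gE f a b) (UNIV - {[]}) [] W"
  unfolding has_winning_strategy_def
  using strat_ok[OF ab inj] strat_win[of f W a b, OF good] by blast

lemma inf_path:
  assumes "cgraph S ES" "s \<in> S"
  shows "\<exists>\<rho> \<kappa>. \<rho> 0 = s \<and> (\<forall>i. (\<rho> i, \<kappa> i, \<rho> (Suc i)) \<in> ES)"
proof -
  have sub: "ES \<subseteq> S \<times> UNIV \<times> S" and ex: "\<forall>v\<in>S. \<exists>c v'. (v, c, v') \<in> ES"
    using assms(1) unfolding cgraph_def by auto
  have "\<forall>v\<in>S. \<exists>p. (v, fst p, snd p) \<in> ES" using ex by auto
  then obtain nxt where nxt: "\<forall>v\<in>S. (v, fst (nxt v), snd (nxt v)) \<in> ES" by metis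
  define \<rho> where "\<rho> n = ((snd \<circ> nxt) ^^ n) s" for n
  have inS: "\<rho> n \<in> S" for n
  proof (induction n)
    case 0 then show ?case using assms(2) unfolding \<rho>_def by simp
  next
    case (Suc n)
    have "(\<rho> n, fst (nxt (\<rho> n)), snd (nxt (\<rho> n))) \<in> ES" using nxt Suc by blast
    then have "snd (nxt (\<rho> n)) \<in> S" using sub by blast
    then show ?case unfolding \<rho>_def by simp
  qed
  have "(\<rho> i, fst (nxt (\<rho> i)), \<rho> (Suc i)) \<in> ES" for i
    using nxt inS[of i] unfolding \<rho>_def by simp
  moreover have "\<rho> 0 = s" unfolding \<rho>_def by simp
  ultimately show ?thesis by (intro exI[of _ \<rho>] exI[of _ "\<lambda>i. fst (nxt (\<rho> i))"]) auto
qed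

lemma lower:
  fixes f :: "'c \<Rightarrow> 'k" and a b :: 'c and S :: "('c list \<times> 'm) set"
  assumes ab: "a \<noteq> b" and inj: "inj f"
    and bad: "\<And>\<kappa>. \<kappa> 0 = \<kappa> 1 \<Longrightarrow> (\<forall>i. \<kappa> i \<in> range f) \<Longrightarrow> \<kappa> \<notin> W"
    and st: "is_strategy UNIV (gE f a b) (UNIV - {[]}) [] S ES fst s0"
    and win: "winning_from ES s0 W"
    and chr: "chromatic ES \<delta>"
  shows "inj (\<lambda>c. \<delta> (snd s0) (f c)) \<and> (\<forall>c. ([a], \<delta> (snd s0) (f c)) \<in> S)"
proof -
  note st' = st[unfolded is_strategy_def]
  have cg: "cgraph S ES" using st' by blast
  have s0S: "s0 \<in> S" using st' by blast
  have fs0: "fst s0 = []" using st' by blast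
  have edg: "\<And>s c s'. (s, c, s') \<in> ES \<Longrightarrow> (fst s, c, fst s') \<in> gE f a b" using st' by blast
  have adam: "\<And>v c v' s. v \<in> UNIV - (UNIV - {[]}) \<Longrightarrow> (v, c, v') \<in> gE f a b \<Longrightarrow> s \<in> S \<Longrightarrow> fst s = v \<Longrightarrow>
        (\<exists>s'. s' \<in> S \<and> fst s' = v' \<and> (s, c, s') \<in> ES)"
    using st' by blast
  define m0 where "m0 = snd s0"
  have s0: "s0 = ([], m0)" using fs0 unfolding m0_def by (cases s0) auto
  have step: "\<And>c v'. v' \<noteq> [] \<Longrightarrow> (v', \<delta> m0 (f c)) \<in> S \<and> (s0, f c, (v', \<delta> m0 (f c))) \<in> ES"
  proof -
    fix c :: 'c and v' :: "'c list" assume "v' \<noteq> []"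
    then have "([], f c, v') \<in> gE f a b" unfolding gE_def by auto
    then obtain s' where s': "s' \<in> S" "fst s' = v'" "(s0, f c, s') \<in> ES"
      using adam[of "[]" "f c" v' s0] s0S fs0 by auto
    obtain m' where "s' = (v', m')" using s'(2) by (cases s') auto
    moreover have "m' = \<delta> m0 (f c)"
    proof -
      have "(([], m0), f c, (v', m')) \<in> ES" using s'(3) s0 calculation by simp
      then show ?thesis using chr unfolding chromatic_def by blast
    qed
    ultimately show "(v', \<delta> m0 (f c)) \<in> S \<and> (s0, f c, (v', \<delta> m0 (f c))) \<in> ES" using s' by simp
  qed
  have "inj (\<lambda>c. \<delta> m0 (f c))"
  proof (rule injI, rule ccontr)
    fix c c' assume eq: "\<delta> m0 (f c) = \<delta> m0 (f c')" and ne: "c \<noteq> c'"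
    define m where "m = \<delta> m0 (f c)"
    define s1 where "s1 = ([c, c'], m)"
    have s1S: "s1 \<in> S" and e1: "(s0, f c, s1) \<in> ES" and e2: "(s0, f c', s1) \<in> ES"
      using step[of "[c,c']" c] step[of "[c,c']" c'] eq unfolding s1_def m_def by auto
    obtain e s2 where e: "(s1, e, s2) \<in> ES" using cg s1S unfolding cgraph_def by blast
    have s2S: "s2 \<in> S" using e cg unfolding cgraph_def by blast
    have "([c, c'], e, fst s2) \<in> gE f a b" using edg[OF e] unfolding s1_def by simp
    then obtain d where d: "d \<in> opts a b [c, c']" "e = f d" unfolding gE_def by auto
    then have "d = c \<or> d = c'" using ne unfolding opts_def by auto
    then have e0: "(s0, e, s1) \<in> ES" using e1 e2 d by auto
    obtain \<rho>' \<kappa>' where p: "\<rho>' 0 = s2" "\<forall>i. (\<rho>' i, \<kappa>' i, \<rho>' (Suc i)) \<in> ES"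
      using inf_path[OF cg s2S] by blast
    define \<rho> where "\<rho> n = (case n of 0 \<Rightarrow> s0 | Suc 0 \<Rightarrow> s1 | Suc (Suc k) \<Rightarrow> \<rho>' k)" for n
    define \<kappa> where "\<kappa> n = (case n of 0 \<Rightarrow> e | Suc 0 \<Rightarrow> e | Suc (Suc k) \<Rightarrow> \<kappa>' k)" for n
    have "\<rho> 0 = s0" unfolding \<rho>_def by simp
    moreover have "(\<rho> i, \<kappa> i, \<rho> (Suc i)) \<in> ES" for i
    proof (cases i)
      case 0 then show ?thesis using e0 unfolding \<rho>_def \<kappa>_def by simp
    next
      case (Suc j) then show ?thesis
        using e p unfolding \<rho>_def \<kappa>_def by (cases j) auto
    qed
    ultimately have "\<kappa> \<in> W" using win[unfolded winning_from_def, rule_format, of \<rho> \<kappa>] by blast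
    moreover have "\<kappa> 0 = \<kappa> 1" unfolding \<kappa>_def by simp
    moreover have "\<kappa> i \<in> range f" for i
      using edg[OF \<open>(\<rho> i, \<kappa> i, \<rho> (Suc i)) \<in> ES\<close>] unfolding gE_def by auto
    ultimately show False using bad by blast
  qed
  then show ?thesis using step[of "[a]"] unfolding m0_def by auto
qed

lemma enum_UNIV: "enumerate (UNIV :: nat set) n = n"
proof (induction n)
  case 0 show ?case unfolding enumerate_0 by (rule Least_equality) auto
next
  case (Suc n)
  have "enumerate (UNIV :: nat set) (Suc n) = (LEAST s. s \<in> UNIV \<and> enumerate UNIV n < s)"
    by (rule enumerate_Suc'') simp
  also have "\<dots> = Suc n" using Suc by simp (rule Least_equality, auto)
  finally show ?case .
qed

lemma eps_all_some:
  assumes "\<forall>i. \<kappa> i \<noteq> None"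
  shows "\<kappa> \<in> eps_ext W \<longleftrightarrow> (\<lambda>n. the (\<kappa> n)) \<in> W"
proof -
  have U: "{i. \<kappa> i \<noteq> None} = UNIV" using assms by auto
  have U': "{i. \<exists>y. \<kappa> i = Some y} = UNIV" using assms by auto
  show ?thesis unfolding eps_ext_def using assms apply (auto simp: U' enum_UNIV)
    by (metis order_refl option.distinct(1))
qed

theorem propositionB1:
  assumes "\<exists>a b :: 'c. a \<noteq> b"
  shows "\<not> chrom_mem_lt TYPE('c list) TYPE('m) (W2 :: (nat \<Rightarrow> 'c) set) (card_of (UNIV :: 'c set))
       \<and> \<not> eps_chrom_mem_lt TYPE('c list) TYPE('m) (W2 :: (nat \<Rightarrow> 'c) set) (card_of (UNIV :: 'c set))"
proof -
  obtain a b :: 'c where ab: "a \<noteq> b" using assms by blast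
  have part1: "\<not> chrom_mem_lt TYPE('c list) TYPE('m) (W2 :: (nat \<Rightarrow> 'c) set) (card_of (UNIV :: 'c set))"
  proof
    assume h: "chrom_mem_lt TYPE('c list) TYPE('m) (W2 :: (nat \<Rightarrow> 'c) set) (card_of (UNIV :: 'c set))"
    have hw: "has_winning_strategy UNIV (gE id a b) (UNIV - {[]}) [] (W2 :: (nat \<Rightarrow> 'c) set)"
      by (rule has_win[OF ab]) (auto simp: W2_def)
    obtain S :: "('c list \<times> 'm) set" and ES s0 \<delta> where
      st: "is_strategy UNIV (gE id a b) (UNIV - {[]}) [] S ES fst s0" and
      win: "winning_from ES s0 W2" and chr: "chromatic ES \<delta>" and
      fib: "\<forall>v. ordLess2 (card_of {m. (v, m) \<in> S}) (card_of (UNIV :: 'c set))"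
    proof -
      have "is_game UNIV (gE id a b) (UNIV - {[]}) [] \<and> has_winning_strategy UNIV (gE id a b) (UNIV - {[]}) [] (W2 :: (nat \<Rightarrow> 'c) set)"
        using game_ok[of id a b] hw by blast
      then show ?thesis using h that unfolding chrom_mem_lt_def by metis
    qed
    have L: "inj (\<lambda>c. \<delta> (snd s0) (id c)) \<and> (\<forall>c. ([a], \<delta> (snd s0) (id c)) \<in> S)"
      by (rule lower[OF ab _ _ st win chr]) (simp, auto simp: W2_def intro: exI[of _ 0])
    then have "inj_on (\<lambda>c. \<delta> (snd s0) (id c)) (UNIV :: 'c set) \<and> (\<lambda>c. \<delta> (snd s0) (id c)) ` UNIV \<subseteq> {m. ([a], m) \<in> S}" by blast
    then have "\<exists>g. inj_on g (UNIV :: 'c set) \<and> g ` UNIV \<subseteq> {m. ([a], m) \<in> S}" by blast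
    then have "ordLeq2 (card_of (UNIV :: 'c set)) (card_of {m. ([a], m) \<in> S})"
      using card_of_ordLeq by blast
    then show False using fib not_ordLess_ordLeq by blast
  qed
  have part2: "\<not> eps_chrom_mem_lt TYPE('c list) TYPE('m) (W2 :: (nat \<Rightarrow> 'c) set) (card_of (UNIV :: 'c set))"
  proof
    assume h: "eps_chrom_mem_lt TYPE('c list) TYPE('m) (W2 :: (nat \<Rightarrow> 'c) set) (card_of (UNIV :: 'c set))"
    have good: "\<kappa> \<in> eps_ext W2" if "\<forall>i. \<kappa> i \<in> range Some" "\<forall>i. \<kappa> i \<noteq> \<kappa> (Suc i)"
      for \<kappa> :: "nat \<Rightarrow> 'c option"
    proof -
      have ns: "\<forall>i. \<kappa> i \<noteq> None" using that by auto
      have "the (\<kappa> i) \<noteq> the (\<kappa> (Suc i))" for i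
        using that by (metis image_iff option.sel)
      then show ?thesis using eps_all_some[OF ns] by (auto simp: W2_def)
    qed
    have hw: "has_winning_strategy UNIV (gE Some a b) (UNIV - {[]}) [] (eps_ext (W2 :: (nat \<Rightarrow> 'c) set))"
      by (rule has_win[OF ab]) (auto intro: good)
    obtain M :: "'m set" and S :: "('c list \<times> 'm) set" and ES s0 \<delta> where
      M: "ordLess2 (card_of M) (card_of (UNIV :: 'c set))" and
      SM: "S \<subseteq> UNIV \<times> M" and dM: "\<forall>m\<in>M. \<forall>c. \<delta> m c \<in> M" and
      st: "is_strategy UNIV (gE Some a b) (UNIV - {[]}) [] S ES fst s0" and
      win: "winning_from ES s0 (eps_ext W2)" and chr: "chromatic ES \<delta>"
    proof -
      have "is_game UNIV (gE Some a b) (UNIV - {[]}) [] \<and> has_winning_strategy UNIV (gE Some a b) (UNIV - {[]}) [] (eps_ext (W2 :: (nat \<Rightarrow> 'c) set))"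
        using game_ok[of Some a b] hw by blast
      then show ?thesis using h that unfolding eps_chrom_mem_lt_def by metis
    qed
    have bad: "\<kappa> \<notin> eps_ext W2" if "\<kappa> 0 = \<kappa> 1" "\<forall>i. \<kappa> i \<in> range Some" for \<kappa> :: "nat \<Rightarrow> 'c option"
    proof -
      have ns: "\<forall>i. \<kappa> i \<noteq> None" using that(2) by auto
      show ?thesis using eps_all_some[OF ns] that(1) by (auto simp: W2_def intro: exI[of _ 0])
    qed
    have L: "inj (\<lambda>c. \<delta> (snd s0) (Some c)) \<and> (\<forall>c. ([a], \<delta> (snd s0) (Some c)) \<in> S)"
      by (rule lower[OF ab _ _ st win chr]) (simp, rule bad, assumption+)
    then have "inj_on (\<lambda>c. \<delta> (snd s0) (Some c)) (UNIV :: 'c set) \<and> (\<lambda>c. \<delta> (snd s0) (Some c)) ` UNIV \<subseteq> M" using SM by blast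
    then have "\<exists>g. inj_on g (UNIV :: 'c set) \<and> g ` UNIV \<subseteq> M" by blast
    then have "ordLeq2 (card_of (UNIV :: 'c set)) (card_of M)"
      using card_of_ordLeq by blast
    then show False using M not_ordLess_ordLeq by blast
  qed
  show ?thesis using part1 part2 by blast
qed

end
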